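(* Let $c\ge 0$, $b>0$, $q(x)=c/x^2$, and consider the eigenvalue problem $$-u''+q(x)u=\lambda u,\quad x\in(0,b),\qquad u(0)=u(b)=0 .$$ Let $\lambda_j$ be its eigenvalues and $u_j$ corresponding eigenfunctions normalized by $\int_0^b u_j^2\,dx=1$, and set $J_j(b)=u_j'(b)^2/\lambda_j$. Then $$J_j(b)=\frac{2}{b},\qquad j=1,2,\dots .$$ *)

theory Defs
  imports "HOL-Analysis.Analysis"
begin

end

theory Submission
  imports Defs
begin


lemma mono_by_deriv:
  fixes G G' :: "real \<Rightarrow> real"
  assumes "\<And>x. \<alpha> < x \<Longrightarrow> x < \<beta> \<Longrightarrow> (G has_real_derivative G' x) (at x)"
    and "\<And>x. \<alpha> < x \<Longrightarrow> x < \<beta> \<Longrightarrow> G' x \<ge> 0"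
    and "\<alpha> < s" "s \<le> t" "t < \<beta>"
  shows "G s \<le> G t"
proof (rule DERIV_nonneg_imp_nondecreasing[OF assms(4)])
  fix x assume "s \<le> x" "x \<le> t"
  then show "\<exists>y. (G has_real_derivative y) (at x) \<and> 0 \<le> y"
    using assms by (intro exI[of _ "G' x"]) auto
qed

lemma log_blowup:
  fixes G G' :: "real \<Rightarrow> real"
  assumes d: "\<delta> > 0" and a: "a > 0"
    and D: "\<And>x. 0 < x \<Longrightarrow> x < \<delta> \<Longrightarrow> (G has_real_derivative G' x) (at x)"
    and L: "\<And>x. 0 < x \<Longrightarrow> x < \<delta> \<Longrightarrow> G' x \<ge> a / x"
    and P: "\<And>x. 0 < x \<Longrightarrow> x < \<delta> \<Longrightarrow> G x \<ge> 0"
  shows False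
proof -
  define s where "s = \<delta> / 2"
  have s: "0 < s" "s < \<delta>" using d by (auto simp: s_def)
  define t where "t = s * exp (- (G s + 1) / a)"
  have Gs: "G s \<ge> 0" using P s by auto
  have t0: "0 < t" using s by (auto simp: t_def)
  have "- (G s + 1) / a < 0" using Gs a by (simp add: divide_neg_pos)
  then have "exp (- (G s + 1) / a) < 1" by simp
  then have ts: "t < s" using s by (auto simp: t_def)
  have lnt: "ln t = ln s - (G s + 1) / a" using s a by (simp add: t_def ln_mult) (simp add: field_simps)
  have "(\<lambda>x. G x - a * ln x) t \<le> (\<lambda>x. G x - a * ln x) s"
  proof (rule mono_by_deriv[where \<alpha>=0 and \<beta>=\<delta> and G="\<lambda>x. G x - a * ln x" and G'="\<lambda>x. G' x - a * (1/x)"])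
    fix x assume x: "0 < x" "x < \<delta>"
    show "((\<lambda>x. G x - a * ln x) has_real_derivative G' x - a * (1/x)) (at x)"
      using x by (auto intro!: derivative_eq_intros D)
    show "0 \<le> G' x - a * (1 / x)" using L[OF x] by simp
  qed (use t0 ts s in auto)
  then have "G t \<le> G s + a * (ln t - ln s)" by (simp add: algebra_simps)
  also have "\<dots> = -1" using a by (simp add: lnt)
  finally show False using P[of t] t0 ts s by auto
qed



theorem mainTheorem4:
  fixes c b lam d :: real and u :: "real \<Rightarrow> real"
  assumes c: "c \<ge> 0" and b: "b > 0"
    and diff: "\<forall>x\<in>{0<..<b}. u differentiable (at x) \<and> deriv u differentiable (at x)"
    and ode: "\<forall>x\<in>{0<..<b}. - deriv (deriv u) x + (c / x\<^sup>2) * u x = lam * u x"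
    and cont: "continuous_on {0..b} u"
    and bc0: "u 0 = 0" and bcb: "u b = 0"
    and int: "((\<lambda>x. (u x)\<^sup>2) has_integral 1) {0..b}"
    and db: "(u has_real_derivative d) (at_left b)"
  shows "d\<^sup>2 / lam = 2 / b"
proof -
  define v where "v = deriv u"
  define p where "p = (\<lambda>x::real. c / x^2 - lam)"
  have du: "(u has_real_derivative v x) (at x)" if x: "0 < x" "x < b" for x
    using diff x by (auto simp: v_def DERIV_deriv_iff_real_differentiable)
  have dv: "(v has_real_derivative p x * u x) (at x)" if x: "0 < x" "x < b" for x
  proof -
    have "(v has_real_derivative deriv v x) (at x)"
      using diff x by (auto simp: v_def DERIV_deriv_iff_real_differentiable)
    moreover have "deriv v x = p x * u x"
      using ode x by (auto simp: v_def p_def algebra_simps)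
    ultimately show ?thesis by simp
  qed
  have "bounded (u ` {0..b})"
    by (rule compact_imp_bounded[OF compact_continuous_image[OF cont compact_Icc]])
  then obtain M where M0': "\<forall>y\<in>u ` {0..b}. norm y \<le> M"
    unfolding bounded_iff by (elim exE) 
  have M: "\<bar>u x\<bar> \<le> M" if "x \<in> {0..b}" for x
  proof -
    have "u x \<in> u ` {0..b}" using that by (rule imageI)
    then have "norm (u x) \<le> M" using M0' by blast
    then show ?thesis by simp
  qed
  have M0: "M \<ge> 0" using M[of 0] b by auto
  have u0: "(u \<longlongrightarrow> 0) (at_right 0)" using continuous_on_Icc_at_rightD[OF cont b] bc0 by simp
  have ub: "(u \<longlongrightarrow> 0) (at_left b)" using continuous_on_Icc_at_leftD[OF cont b] bcb by simp
  have lip: "\<bar>v x - v y\<bar> \<le> K * \<bar>x - y\<bar>"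
    if xy: "x \<in> {\<alpha><..<\<beta>}" "y \<in> {\<alpha><..<\<beta>}" and ab: "0 \<le> \<alpha>" "\<beta> \<le> b"
       and K: "\<And>z. z \<in> {\<alpha><..<\<beta>} \<Longrightarrow> \<bar>p z * u z\<bar> \<le> K" for x y \<alpha> \<beta> K
  proof -
    have "norm (v x - v y) \<le> K * norm (x - y)"
    proof (rule field_differentiable_bound[of "{\<alpha><..<\<beta>}" v "\<lambda>z. p z * u z" K])
      fix z assume z: "z \<in> {\<alpha><..<\<beta>}"
      then have "0 < z" "z < b" using ab by auto
      then show "(v has_field_derivative p z * u z) (at z within {\<alpha><..<\<beta>})"
        by (rule has_field_derivative_at_within[OF dv])
      show "norm (p z * u z) \<le> K" using K[OF z] by simp
    next
      show "convex {\<alpha><..<\<beta>}" by simp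
    qed (fact xy)+
    then show ?thesis by simp
  qed
  have vb: "(v \<longlongrightarrow> d) (at_left b)"
  proof -
    define K where "K = (c / (b/2)^2 + \<bar>lam\<bar>) * M"
    have K0: "K \<ge> 0" using c M0 by (simp add: K_def)
    have wbd: "\<bar>p z * u z\<bar> \<le> K" if z: "z \<in> {b/2<..<b}" for z
    proof -
      have z2: "(b/2)^2 \<le> z^2" using z b by (intro power_mono) auto
      have "c / z^2 \<le> c / (b/2)^2"
        using z2 c b z by (intro divide_left_mono) (auto intro!: mult_pos_pos)
      moreover have "0 \<le> c / z^2" "0 \<le> c / (b/2)^2" using c by auto
      ultimately have "\<bar>p z\<bar> \<le> c / (b/2)^2 + \<bar>lam\<bar>"
        unfolding p_def abs_le_iff using abs_ge_self[of lam] abs_ge_minus_self[of lam] by linarith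
      moreover have "\<bar>u z\<bar> \<le> M" using z b by (intro M) auto
      ultimately have "\<bar>p z\<bar> * \<bar>u z\<bar> \<le> (c / (b/2)^2 + \<bar>lam\<bar>) * M"
        by (intro mult_mono) auto
      then show ?thesis by (simp add: K_def abs_mult)
    qed
    have Q: "((\<lambda>y. (u y - u b) / (y - b)) \<longlongrightarrow> d) (at_left b)"
      using db by (simp add: has_field_derivative_iff)
    have ev: "eventually (\<lambda>s. norm (v s - (u s - u b) / (s - b)) \<le> K * (b - s)) (at_left b)"
      unfolding eventually_at_left_field
    proof (intro exI[of _ "b/2"] conjI allI impI)
      show "b / 2 < b" using b by simp
      fix s assume s: "b/2 < s" "s < b"
      have "continuous_on {s..b} u" using s b by (intro continuous_on_subset[OF cont]) auto
      moreover have "u differentiable (at x)" if "s < x" "x < b" for x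
        using diff that s b by auto
      ultimately have "\<exists>l z. s < z \<and> z < b \<and> (u has_real_derivative l) (at z) \<and> u b - u s = (b - s) * l"
        using s by (intro MVT) auto
      then obtain l z where z: "s < z" "z < b" "(u has_real_derivative l) (at z)"
          "u b - u s = (b - s) * l" by blast
      have "l = v z" using DERIV_unique[OF z(3) du[of z]] z s b by auto
      then have "(u s - u b) / (s - b) = v z" using z(4) s by (auto simp: field_simps)
      moreover have "\<bar>v s - v z\<bar> \<le> K * \<bar>s - z\<bar>"
        using s z b by (intro lip[of s "b/2" b z K] wbd) auto
      moreover have "K * \<bar>s - z\<bar> \<le> K * (b - s)" using K0 s z by (intro mult_left_mono) auto
      ultimately show "norm (v s - (u s - u b) / (s - b)) \<le> K * (b - s)" by simp
    qed
    have "((\<lambda>s. v s - (u s - u b) / (s - b)) \<longlongrightarrow> 0) (at_left b)"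
      by (rule Lim_null_comparison[OF ev]) (auto intro!: tendsto_eq_intros)
    then have "((\<lambda>s. (v s - (u s - u b) / (s - b)) + (u s - u b) / (s - b)) \<longlongrightarrow> 0 + d) (at_left b)"
      by (intro tendsto_add Q)
    then show ?thesis by simp
  qed
  define f where "f = (\<lambda>x. 2 * lam * (u x)^2)"
  have fc: "continuous_on {0..b} f" using cont by (auto simp: f_def intro!: continuous_intros)
  define I where "I = (\<lambda>x. integral {0..x} f)"
  have Ic: "continuous_on {0..b} I" unfolding I_def
    by (rule indefinite_integral_continuous_1) (rule integrable_continuous_interval[OF fc])
  have "(f has_integral 2 * lam * 1) {0..b}" unfolding f_def
    by (rule has_integral_mult_right[OF int])
  then have Ib: "I b = 2 * lam" by (simp add: I_def integral_unique)
  have I0: "I 0 = 0" by (simp add: I_def)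
  have dI: "(I has_real_derivative f x) (at x)" if x: "0 < x" "x < b" for x
    using integral_has_real_derivative[OF fc, of x] x at_within_Icc_at[of 0 x b]
    by (simp add: I_def)
  define F where "F = (\<lambda>x. x * (v x)^2 - (c / x - lam * x) * (u x)^2 - u x * v x)"
  have dF: "(F has_real_derivative f x) (at x)" if x: "0 < x" "x < b" for x
  proof -
    have "(F has_real_derivative
        (1 * (v x)^2 + x * (2 * v x * (p x * u x)))
        - ((- c / x^2 - lam) * (u x)^2 + (c / x - lam * x) * (2 * u x * v x))
        - (v x * v x + u x * (p x * u x))) (at x)"
      unfolding F_def using x
      by (auto intro!: derivative_eq_intros du dv simp: power2_eq_square field_simps)
    moreover have "(1 * (v x)^2 + x * (2 * v x * (p x * u x)))
        - ((- c / x^2 - lam) * (u x)^2 + (c / x - lam * x) * (2 * u x * v x))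
        - (v x * v x + u x * (p x * u x)) = f x"
      using x by (simp add: p_def f_def power2_eq_square field_simps)
    ultimately show ?thesis by simp
  qed
  obtain C where C: "\<And>x. x \<in> {0<..<b} \<Longrightarrow> F x - I x = C"
  proof -
    have "\<exists>C. \<forall>x\<in>{0<..<b}. F x - I x = C"
    proof (rule has_field_derivative_zero_constant)
      fix x :: real assume x: "x \<in> {0<..<b}"
      have "((\<lambda>x. F x - I x) has_real_derivative f x - f x) (at x)"
        using x by (intro DERIV_diff dF dI) auto
      then have "((\<lambda>x. F x - I x) has_field_derivative 0) (at x)" by simp
      then show "((\<lambda>x. F x - I x) has_field_derivative 0) (at x within {0<..<b})"
        by (rule has_field_derivative_at_within)
    qed simp
    then show ?thesis using that by blast
  qed
  have evI0: "eventually (\<lambda>x. F x = C + I x) (at_right 0)"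
    unfolding eventually_at_right_field using b C
    by (intro exI[of _ b]) (auto simp: algebra_simps)
  have evIb: "eventually (\<lambda>x. F x = C + I x) (at_left b)"
    unfolding eventually_at_left_field using b C
    by (intro exI[of _ 0]) (auto simp: algebra_simps)
  have FC0: "(F \<longlongrightarrow> C) (at_right 0)"
  proof -
    have "((\<lambda>x. C + I x) \<longlongrightarrow> C + I 0) (at_right 0)"
      by (intro tendsto_add tendsto_const continuous_on_Icc_at_rightD[OF Ic b])
    then show ?thesis using I0 tendsto_cong[OF evI0] by simp
  qed
  have FCb: "(F \<longlongrightarrow> C + 2 * lam) (at_left b)"
  proof -
    have "((\<lambda>x. C + I x) \<longlongrightarrow> C + I b) (at_left b)"
      by (intro tendsto_add tendsto_const continuous_on_Icc_at_leftD[OF Ic b])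
    then show ?thesis using Ib tendsto_cong[OF evIb] by simp
  qed
  have Fb: "(F \<longlongrightarrow> b * d^2) (at_left b)"
  proof -
    have "(F \<longlongrightarrow> b * d^2 - (c / b - lam * b) * 0^2 - 0 * d) (at_left b)"
      unfolding F_def using b by (intro tendsto_intros ub vb) auto
    then show ?thesis by simp
  qed
  have Cb: "C + 2 * lam = b * d^2"
    using tendsto_unique[OF trivial_limit_at_left_real FCb Fb] .
  define G where "G = (\<lambda>x. u x * v x)"
  define G' where "G' = (\<lambda>x. (v x)^2 + p x * (u x)^2)"
  have dG: "(G has_real_derivative G' x) (at x)" if x: "0 < x" "x < b" for x
  proof -
    have "(G has_real_derivative v x * v x + u x * (p x * u x)) (at x)"
      unfolding G_def using x by (auto intro!: derivative_eq_intros du dv)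
    then show ?thesis by (simp add: G'_def power2_eq_square algebra_simps)
  qed
  have main: "(G \<longlongrightarrow> 0) (at_right 0) \<and> C = 0"
  proof (cases "c = 0")
    case True
    define K0 where "K0 = \<bar>lam\<bar> * M"
    have K0: "K0 \<ge> 0" using M0 by (simp add: K0_def)
    have wbd: "\<bar>p z * u z\<bar> \<le> K0" if z: "z \<in> {0<..<b}" for z
    proof -
      have "\<bar>u z\<bar> \<le> M" using z by (intro M) auto
      then have "\<bar>lam\<bar> * \<bar>u z\<bar> \<le> \<bar>lam\<bar> * M" by (intro mult_left_mono) auto
      then show ?thesis using True by (simp add: p_def K0_def abs_mult)
    qed
    define B where "B = \<bar>v (b/2)\<bar> + K0 * b"
    have vB: "\<bar>v x\<bar> \<le> B" if x: "0 < x" "x < b" for x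
    proof -
      have "\<bar>v x - v (b/2)\<bar> \<le> K0 * \<bar>x - b/2\<bar>"
        using x b by (intro lip[of x 0 b "b/2" K0] wbd) auto
      moreover have "K0 * \<bar>x - b/2\<bar> \<le> K0 * b" using x b K0 by (intro mult_left_mono) auto
      moreover have "\<bar>v x\<bar> - \<bar>v (b/2)\<bar> \<le> \<bar>v x - v (b/2)\<bar>" by (rule abs_triangle_ineq2)
      ultimately show ?thesis unfolding B_def by linarith
    qed
    have B0: "B \<ge> 0" using vB[of "b/2"] b by auto
    have evb: "eventually (\<lambda>x. 0 < x \<and> x < b) (at_right 0)"
      unfolding eventually_at_right_field using b by (intro exI[of _ b]) auto
    have G0: "(G \<longlongrightarrow> 0) (at_right 0)"
    proof (rule Lim_null_comparison)
      show "eventually (\<lambda>x. norm (G x) \<le> \<bar>u x\<bar> * B) (at_right 0)"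
        using evb
      proof eventually_elim
        case (elim x)
        then show ?case using vB[of x] by (auto simp: G_def abs_mult intro!: mult_left_mono)
      qed
      have "((\<lambda>x. \<bar>u x\<bar> * B) \<longlongrightarrow> \<bar>0\<bar> * B) (at_right 0)"
        by (intro tendsto_intros u0)
      then show "((\<lambda>x. \<bar>u x\<bar> * B) \<longlongrightarrow> 0) (at_right 0)" by simp
    qed
    have F0: "(F \<longlongrightarrow> 0) (at_right 0)"
    proof (rule Lim_null_comparison)
      show "eventually (\<lambda>x. norm (F x) \<le> x * B^2 + \<bar>lam\<bar> * x * M^2 + \<bar>u x\<bar> * B) (at_right 0)"
        using evb
      proof eventually_elim
        case (elim x)
        have v2: "(v x)^2 \<le> B^2" using vB[of x] elim by (simp add: abs_le_square_iff[symmetric] B0)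
        have u2: "(u x)^2 \<le> M^2" using M[of x] elim M0 by (simp add: abs_le_square_iff[symmetric])
        have "norm (F x) = \<bar>x * (v x)^2 + lam * x * (u x)^2 - u x * v x\<bar>"
          using True by (simp add: F_def algebra_simps)
        also have "\<dots> \<le> x * (v x)^2 + \<bar>lam\<bar> * x * (u x)^2 + \<bar>u x\<bar> * \<bar>v x\<bar>"
        proof -
          have 1: "\<bar>x * (v x)^2 + lam * x * (u x)^2 - u x * v x\<bar> \<le> \<bar>x * (v x)^2 + lam * x * (u x)^2\<bar> + \<bar>u x * v x\<bar>"
            by (rule abs_triangle_ineq4)
          have 2: "\<bar>x * (v x)^2 + lam * x * (u x)^2\<bar> \<le> \<bar>x * (v x)^2\<bar> + \<bar>lam * x * (u x)^2\<bar>"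
            by (rule abs_triangle_ineq)
          have 3: "\<bar>x * (v x)^2\<bar> = x * (v x)^2" "\<bar>lam * x * (u x)^2\<bar> = \<bar>lam\<bar> * x * (u x)^2"
             "\<bar>u x * v x\<bar> = \<bar>u x\<bar> * \<bar>v x\<bar>"
            using elim by (auto simp: abs_mult)
          show ?thesis using 1 2 3 by linarith
        qed
        also have "\<dots> \<le> x * B^2 + \<bar>lam\<bar> * x * M^2 + \<bar>u x\<bar> * B"
          using elim v2 u2 vB[of x]
          by (intro add_mono mult_left_mono) auto
        finally show ?case .
      qed
      have "((\<lambda>x. x * B^2 + \<bar>lam\<bar> * x * M^2 + \<bar>u x\<bar> * B) \<longlongrightarrow> 0 * B^2 + \<bar>lam\<bar> * 0 * M^2 + \<bar>0\<bar> * B) (at_right 0)"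
        by (intro tendsto_intros u0)
      then show "((\<lambda>x. x * B^2 + \<bar>lam\<bar> * x * M^2 + \<bar>u x\<bar> * B) \<longlongrightarrow> 0) (at_right 0)" by simp
    qed
    have "C = 0" using tendsto_unique[OF trivial_limit_at_right_real FC0 F0] .
    with G0 show ?thesis by simp
  next
    case False
    then have cpos: "c > 0" using c by simp
    define \<delta> where "\<delta> = min (b/2) (sqrt (c / (2 * (\<bar>lam\<bar> + 1))))"
    have d0: "0 < \<delta>" using b cpos by (auto simp: \<delta>_def)
    have db': "\<delta> < b" using b by (auto simp: \<delta>_def)
    have hp: "c / (2 * x^2) \<le> p x" if x: "0 < x" "x < \<delta>" for x
    proof -
      have "x < sqrt (c / (2 * (\<bar>lam\<bar> + 1)))" using x by (simp add: \<delta>_def)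
      then have "x^2 < (sqrt (c / (2 * (\<bar>lam\<bar> + 1))))^2"
        using x by (intro power_strict_mono) auto
      then have "x^2 < c / (2 * (\<bar>lam\<bar> + 1))" using cpos by simp
      then have "x^2 * (2 * (\<bar>lam\<bar> + 1)) < c"
        by (simp add: pos_less_divide_eq add_pos_nonneg)
      moreover have "x^2 * (2 * (\<bar>lam\<bar> + 1)) = 2 * (\<bar>lam\<bar> * x^2) + 2 * x^2"
        by (simp add: algebra_simps)
      moreover have "lam * x^2 \<le> \<bar>lam\<bar> * x^2" by (rule mult_right_mono) auto
      moreover have "0 \<le> x^2" by simp
      ultimately have "2 * lam * x^2 \<le> c" by linarith
      then have "lam \<le> c / (2 * x^2)" using x by (simp add: field_simps)
      moreover have "c / x^2 = c / (2 * x^2) + c / (2 * x^2)" by (simp add: field_simps)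
      ultimately show ?thesis by (simp add: p_def)
    qed
    have hp0: "0 \<le> p x" if "0 < x" "x < \<delta>" for x
    proof -
      have "0 \<le> c / (2 * x^2)" using cpos by simp
      then show ?thesis using hp[OF that] by linarith
    qed
    have G'nn: "0 \<le> G' x" if "0 < x" "x < \<delta>" for x
      using hp0[OF that] by (simp add: G'_def)
    have Gmono: "G s \<le> G t" if "0 < s" "s \<le> t" "t < \<delta>" for s t
      by (rule mono_by_deriv[of 0 \<delta> G G']) (use that db' in \<open>auto intro: dG G'nn\<close>)
    have ueq: "\<exists>z. 0 < z \<and> z < x \<and> (u x)^2 = 2 * x * G z" if x: "0 < x" "x < \<delta>" for x
    proof -
      have dg: "((\<lambda>y. (u y)^2) has_real_derivative 2 * G y) (at y)" if "0 < y" "y < b" for y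
        using that by (auto intro!: derivative_eq_intros du simp: G_def)
      have "continuous_on {0..x} u" using x db' by (intro continuous_on_subset[OF cont]) auto
      then have "continuous_on {0..x} (\<lambda>y. (u y)^2)" by (intro continuous_intros)
      moreover have "(\<lambda>y. (u y)^2) differentiable (at y)" if "0 < y" "y < x" for y
        using dg[of y] that x db'
        by (intro differentiableI[OF has_field_derivative_imp_has_derivative[OF dg]]) auto
      ultimately have "\<exists>l z. 0 < z \<and> z < x \<and> ((\<lambda>y. (u y)^2) has_real_derivative l) (at z) \<and> (u x)^2 - (u 0)^2 = (x - 0) * l"
        using x by (intro MVT) auto
      then obtain l z where z: "0 < z" "z < x" "((\<lambda>y. (u y)^2) has_real_derivative l) (at z)"
          "(u x)^2 - (u 0)^2 = (x - 0) * l" by blast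
      have "l = 2 * G z" using DERIV_unique[OF z(3) dg[of z]] z x db' by auto
      then show ?thesis using z bc0 by (intro exI[of _ z]) auto
    qed
    have Gnn: "0 \<le> G x" if x: "0 < x" "x < \<delta>" for x
    proof -
      obtain z where z: "0 < z" "z < x" "(u x)^2 = 2 * x * G z" using ueq[OF x] by blast
      have "0 \<le> 2 * x * G z" using z(3) by (metis zero_le_power2)
      then have "0 \<le> G z" using x by (simp add: zero_le_mult_iff)
      also have "G z \<le> G x" using z x by (intro Gmono) auto
      finally show ?thesis .
    qed
    have G0: "(G \<longlongrightarrow> 0) (at_right 0)"
    proof (rule ccontr)
      assume nG: "\<not> (G \<longlongrightarrow> 0) (at_right 0)"
      have "\<exists>e>0. \<forall>t\<in>{0<..<\<delta>}. e \<le> G t"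
      proof (rule ccontr)
        assume "\<not> (\<exists>e>0. \<forall>t\<in>{0<..<\<delta>}. e \<le> G t)"
        then have H: "\<And>e. e > 0 \<Longrightarrow> \<exists>t\<in>{0<..<\<delta>}. G t < e" by (auto simp: not_le)
        have "(G \<longlongrightarrow> 0) (at_right 0)"
          unfolding tendsto_iff
        proof (intro allI impI)
          fix e :: real assume e: "e > 0"
          obtain t where t: "t \<in> {0<..<\<delta>}" "G t < e" using H[OF e] by blast
          show "eventually (\<lambda>x. dist (G x) 0 < e) (at_right 0)"
            unfolding eventually_at_right_field
          proof (intro exI[of _ t] conjI allI impI)
            show "0 < t" using t by simp
            fix y :: real assume y: "0 < y" "y < t"
            have "0 \<le> G y" using y t by (intro Gnn) auto
            moreover have "G y \<le> G t" using y t by (intro Gmono) auto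
            ultimately show "dist (G y) 0 < e" using t by simp
          qed
        qed
        with nG show False by simp
      qed
      then obtain e where e: "e > 0" "\<And>t. t \<in> {0<..<\<delta>} \<Longrightarrow> e \<le> G t" by blast
      show False
      proof (rule log_blowup[of \<delta> "c * e" G G'])
        show "0 < \<delta>" "0 < c * e" using d0 cpos e by auto
        fix x assume x: "0 < x" "x < \<delta>"
        show "(G has_real_derivative G' x) (at x)" using x db' by (intro dG) auto
        show "0 \<le> G x" using x by (rule Gnn)
        obtain z where z: "0 < z" "z < x" "(u x)^2 = 2 * x * G z" using ueq[OF x] by blast
        have u2: "2 * x * e \<le> (u x)^2" using z e(2)[of z] x by auto
        have "c * e / x = c / (2 * x^2) * (2 * x * e)" using x by (simp add: field_simps power2_eq_square)
        also have "\<dots> \<le> p x * (u x)^2"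
          using u2 hp[OF x] x cpos e hp0[OF x]
          by (intro mult_mono) auto
        also have "\<dots> \<le> G' x" by (simp add: G'_def)
        finally show "c * e / x \<le> G' x" .
      qed
    qed
    have "C = 0"
    proof (rule ccontr)
      assume C0: "C \<noteq> 0"
      have Cp: "\<bar>C\<bar> / 2 > 0" "\<bar>C\<bar> / 4 > 0" using C0 by auto
      have e1: "eventually (\<lambda>x. dist (F x) C < \<bar>C\<bar> / 2) (at_right 0)"
        using FC0 Cp unfolding tendsto_iff by blast
      have e2: "eventually (\<lambda>x. dist (G x) 0 < \<bar>C\<bar> / 4) (at_right 0)"
        using G0 Cp unfolding tendsto_iff by blast
      obtain \<delta>2 where d2: "\<delta>2 > 0" "\<And>y. 0 < y \<Longrightarrow> y < \<delta>2 \<Longrightarrow> dist (F y) C < \<bar>C\<bar> / 2 \<and> dist (G y) 0 < \<bar>C\<bar> / 4"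
        using eventually_conj[OF e1 e2] unfolding eventually_at_right_field by blast
      define \<delta>3 where "\<delta>3 = min \<delta>2 \<delta>"
      show False
      proof (rule log_blowup[of \<delta>3 "\<bar>C\<bar> / 4" G G'])
        show "0 < \<delta>3" "0 < \<bar>C\<bar> / 4" using d0 d2 C0 by (auto simp: \<delta>3_def)
        fix x assume x: "0 < x" "x < \<delta>3"
        then have x': "0 < x" "x < \<delta>" "x < \<delta>2" by (auto simp: \<delta>3_def)
        show "(G has_real_derivative G' x) (at x)" using x' db' by (intro dG) auto
        show "0 \<le> G x" using x' by (intro Gnn) auto
        have FG: "F x + G x = x * ((v x)^2 - p x * (u x)^2)"
          using x' by (simp add: F_def G_def p_def field_simps power2_eq_square)
        have b1: "\<bar>F x - C\<bar> < \<bar>C\<bar> / 2" "\<bar>G x\<bar> < \<bar>C\<bar> / 4"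
          using d2(2)[OF x'(1,3)] by (auto simp: dist_real_def)
        have "\<bar>C\<bar> / 4 \<le> \<bar>F x + G x\<bar>" using b1 by linarith
        also have "\<dots> = x * \<bar>(v x)^2 - p x * (u x)^2\<bar>" using x' by (simp add: FG abs_mult)
        also have "\<dots> \<le> x * G' x"
        proof -
          have "0 \<le> p x * (u x)^2" using hp0[OF x'(1,2)] by simp
          then have "\<bar>(v x)^2 - p x * (u x)^2\<bar> \<le> G' x" unfolding G'_def
            by (simp add: abs_le_iff)
          then show ?thesis using x' by (intro mult_left_mono) auto
        qed
        finally show "\<bar>C\<bar> / 4 / x \<le> G' x" using x' by (simp add: divide_le_eq algebra_simps)
      qed
    qed
    with G0 show ?thesis by simp
  qed
  then have G0: "(G \<longlongrightarrow> 0) (at_right 0)" and C0: "C = 0" by auto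
  have bd: "b * d^2 = 2 * lam" using Cb C0 by simp
  have lam0: "lam \<noteq> 0"
  proof
    assume l0: "lam = 0"
    then have d0: "d = 0" using bd b by simp
    have G'nn: "0 \<le> G' x" if "0 < x" "x < b" for x
      using c l0 by (simp add: G'_def p_def)
    have Gmono: "G s \<le> G t" if "0 < s" "s \<le> t" "t < b" for s t
      by (rule mono_by_deriv[of 0 b G G']) (use that in \<open>auto intro: dG G'nn\<close>)
    have Gb: "(G \<longlongrightarrow> 0) (at_left b)"
    proof -
      have "(G \<longlongrightarrow> 0 * d) (at_left b)" unfolding G_def by (intro tendsto_mult ub vb)
      then show ?thesis by simp
    qed
    have Gz: "G x = 0" if x: "0 < x" "x < b" for x
    proof -
      have "0 \<le> G x"
      proof (rule tendsto_le[OF trivial_limit_at_right_real tendsto_const G0])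
        show "eventually (\<lambda>y. G y \<le> G x) (at_right 0)"
          unfolding eventually_at_right_field using x
          by (intro exI[of _ x]) (auto intro: Gmono)
      qed
      moreover have "G x \<le> 0"
      proof (rule tendsto_le[OF trivial_limit_at_left_real Gb tendsto_const])
        show "eventually (\<lambda>y. G x \<le> G y) (at_left b)"
          unfolding eventually_at_left_field using x
          by (intro exI[of _ x]) (auto intro: Gmono)
      qed
      ultimately show ?thesis by simp
    qed
    have "\<exists>k. \<forall>x\<in>{0<..<b}. (u x)^2 = k"
    proof (rule has_field_derivative_zero_constant)
      fix x :: real assume x: "x \<in> {0<..<b}"
      have "((\<lambda>y. (u y)^2) has_real_derivative 2 * G x) (at x)"
        using x by (auto intro!: derivative_eq_intros du simp: G_def)
      then have "((\<lambda>y. (u y)^2) has_real_derivative 0) (at x)" using Gz x by simp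
      then show "((\<lambda>y. (u y)^2) has_field_derivative 0) (at x within {0<..<b})"
        by (rule has_field_derivative_at_within)
    qed simp
    then obtain k where k: "\<And>x. x \<in> {0<..<b} \<Longrightarrow> (u x)^2 = k" by blast
    have "((\<lambda>x. (u x)^2) \<longlongrightarrow> 0^2) (at_left b)" by (intro tendsto_intros ub)
    then have L: "((\<lambda>x. (u x)^2) \<longlongrightarrow> 0) (at_left b)" by simp
    have ev: "eventually (\<lambda>x. (u x)^2 = k) (at_left b)"
      unfolding eventually_at_left_field using b k by (intro exI[of _ 0]) auto
    have "((\<lambda>x. k) \<longlongrightarrow> 0) (at_left b)"
      using L unfolding tendsto_cong[OF ev] .
    then have k0: "k = 0" using tendsto_const_iff[OF trivial_limit_at_left_real] by blast
    have uz: "(u x)^2 = 0" if "x \<in> {0..b}" for x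
    proof (cases "x = 0 \<or> x = b")
      case True then show ?thesis using bc0 bcb by auto
    next
      case False then show ?thesis using that k k0 by auto
    qed
    have "((\<lambda>x. (u x)^2) has_integral 0) {0..b}"
      by (rule has_integral_eq[OF _ has_integral_0]) (use uz in auto)
    from has_integral_unique[OF int this] show False by simp
  qed
  show ?thesis using bd lam0 b by (simp add: field_simps)
qed

end
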